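(* Let $q>0$, $q\neq1$. For every integer $N\ge 2$, $$\Big(x\frac{d}{dx}-N\Big)H_N(x;q)=2\,[N]_q\,[N-1]_q\,H_{N-2}(x;q).$$
   Context: For $n\ge 0$ let $[n]_q=\frac{q^n-1}{q-1}$, $[0]_q!=1$, $[n]_q!=[1]_q\cdots[n]_q$, and $e_q(z)=\sum_{n\ge0}z^n/[n]_q!$. The $q$-Hermite polynomials $H_N(x;q)$ are defined by the identity of formal power series in $t$: $e^{-t^2}e_q([2]_q t x)=\sum_{N\ge0}H_N(x;q)\,t^N/[N]_q!$. *)

theory Defs
  imports "HOL-Analysis.Analysis" "HOL-Computational_Algebra.Formal_Power_Series"
begin

definition qint :: "real \<Rightarrow> nat \<Rightarrow> real" where
  "qint q n = (q ^ n - 1) / (q - 1)"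

definition qfact :: "real \<Rightarrow> nat \<Rightarrow> real" where
  "qfact q n = (\<Prod>k=1..n. qint q k)"

definition qexp_fps :: "real \<Rightarrow> real \<Rightarrow> real fps" where
  "qexp_fps q c = Abs_fps (\<lambda>n. c ^ n / qfact q n)"

text \<open>q-Hermite polynomials: e^{-t^2} e_q([2]_q t x) = sum_N H_N(x;q) t^N / [N]_q!.\<close>
definition qHermite :: "nat \<Rightarrow> real \<Rightarrow> real \<Rightarrow> real" where
  "qHermite N x q = qfact q N *
     fps_nth (fps_compose (fps_exp 1) (- (fps_X ^ 2)) * qexp_fps q (qint q 2 * x)) N"

end

theory Submission
  imports Defs
begin

definition ecoef :: "nat \<Rightarrow> real" where
  "ecoef n = (if even n then (-1) ^ (n div 2) / fact (n div 2) else 0)"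

lemma powX2_nth: "fps_nth ((- (fps_X ^ 2) :: real fps) ^ i) n = (if n = 2 * i then (-1) ^ i else 0)"
proof -
  have "(- (fps_X ^ 2) :: real fps) ^ i = fps_const ((-1) ^ i) * fps_X ^ (2 * i)"
  proof -
    have "(- (fps_X ^ 2) :: real fps) = fps_const (-1) * fps_X ^ 2" by simp
    hence "(- (fps_X ^ 2) :: real fps) ^ i = fps_const (-1) ^ i * (fps_X ^ 2) ^ i"
      by (simp only: power_mult_distrib)
    also have "\<dots> = fps_const ((-1) ^ i) * fps_X ^ (2 * i)"
      by (simp only: fps_const_power power_mult)
    finally show ?thesis .
  qed
  hence "fps_nth ((- (fps_X ^ 2) :: real fps) ^ i) n = fps_nth (fps_const ((-1) ^ i) * fps_X ^ (2 * i)) n"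
    by (simp only:)
  also have "\<dots> = (if n = 2 * i then (-1) ^ i else 0)" by simp
  finally show ?thesis .
qed

lemma E_nth: "fps_nth (fps_compose (fps_exp 1) (- (fps_X ^ 2)) :: real fps) n = ecoef n"
proof -
  have "fps_nth (fps_compose (fps_exp 1) (- (fps_X ^ 2)) :: real fps) n
      = (\<Sum>i=0..n. (1 / fact i) * (if n = 2 * i then (-1) ^ i else 0))"
    by (simp add: fps_compose_nth powX2_nth)
  also have "\<dots> = (\<Sum>i\<in>{0..n} \<inter> {i. n = 2 * i}. (1 / fact i) * (-1) ^ i)"
    by (simp add: sum.inter_restrict) (rule sum.cong, auto)
  also have "\<dots> = ecoef n"
  proof (cases "even n")
    case True
    then have "{0..n} \<inter> {i. n = 2 * i} = {n div 2}" by auto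
    with True show ?thesis by (simp add: ecoef_def)
  next
    case False
    then have "{0..n} \<inter> {i. n = 2 * i} = {}" by auto
    with False show ?thesis by (simp add: ecoef_def)
  qed
  finally show ?thesis .
qed

lemma ecoef_rec: "i \<ge> 2 \<Longrightarrow> - real i * ecoef i = 2 * ecoef (i - 2)"
proof (cases "even i")
  case True
  assume "i \<ge> 2"
  then obtain k where k: "i = 2 * Suc k" using True by (metis dvd_def le_add_diff_inverse2 not0_implies_Suc mult_0_right not_numeral_le_zero)
  have f: "fact k > (0::real)" by simp
  from k have "i - 2 = 2 * k" by simp
  have d: "fact k + fact k * real k \<noteq> 0" using f
    by (metis add_pos_nonneg mult_nonneg_nonneg of_nat_0_le_iff less_le order_less_imp_le)
  with k f show ?thesis by (simp add: ecoef_def field_simps)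
next
  case False
  assume "i \<ge> 2"
  then have "odd (i - 2)" using False by auto
  with False show ?thesis by (simp add: ecoef_def)
qed

lemma qint_nz: "q > 0 \<Longrightarrow> q \<noteq> 1 \<Longrightarrow> k \<ge> 1 \<Longrightarrow> qint q k \<noteq> 0"
proof -
  assume a: "q > 0" "q \<noteq> 1" "k \<ge> 1"
  have "q ^ k \<noteq> 1"
  proof (cases "q < 1")
    case True
    then have "q ^ k < 1" using a by (simp add: power_less_one_iff)
    thus ?thesis by simp
  next
    case False
    then have "q > 1" using a by simp
    then have "1 < q ^ k" using a by (intro one_less_power) auto
    thus ?thesis by simp
  qed
  thus ?thesis using a unfolding qint_def by simp
qed

lemma qfact_nz: "q > 0 \<Longrightarrow> q \<noteq> 1 \<Longrightarrow> qfact q k \<noteq> 0"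
  unfolding qfact_def using qint_nz by (simp add: prod_zero_iff)

lemma qfact_Suc: "qfact q (Suc n) = qfact q n * qint q (Suc n)"
  unfolding qfact_def by simp

lemma qH_eq: "qHermite N x q = qfact q N * (\<Sum>i=0..N. ecoef i * (qint q 2 * x) ^ (N - i) / qfact q (N - i))"
  unfolding qHermite_def by (simp add: fps_mult_nth E_nth qexp_fps_def)

lemma x_deriv_term: "x * (real m * (a * x) ^ (m - 1) * a) = real m * (a * x) ^ m"
  by (cases m) auto

theorem mainTheorem3:
  fixes q x :: real and N :: nat
  assumes "q > 0" and "q \<noteq> 1" and "N \<ge> 2"
  shows "x * deriv (\<lambda>y. qHermite N y q) x - real N * qHermite N x q
         = 2 * qint q N * qint q (N - 1) * qHermite (N - 2) x q"
proof -
  obtain M where NM: "N = Suc (Suc M)" using assms(3) by (metis add_2_eq_Suc le_iff_add)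
  define a where "a = qint q 2"
  define f where "f = (\<lambda>i y. ecoef i * (a * y) ^ (N - i) / qfact q (N - i))"
  have Hf: "(\<lambda>y. qHermite N y q) = (\<lambda>y. qfact q N * (\<Sum>i=0..N. f i y))"
    by (simp add: qH_eq f_def a_def)
  have D: "((\<lambda>y. qfact q N * (\<Sum>i=0..N. f i y)) has_field_derivative
      qfact q N * (\<Sum>i=0..N. ecoef i * (real (N - i) * (a * x) ^ (N - i - 1) * a) / qfact q (N - i))) (at x)"
  proof -
    have T: "((\<lambda>y. f i y) has_field_derivative ecoef i * (real (N - i) * (a * x) ^ (N - i - 1) * a) / qfact q (N - i)) (at x)" for i
    proof -
      have "((\<lambda>y. (a * y) ^ (N - i)) has_field_derivative real (N - i) * (a * x) ^ (N - i - 1) * a) (at x)"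
        by (rule derivative_eq_intros refl | simp)+
      from DERIV_cdivide[OF DERIV_cmult[OF this, of "ecoef i"], of "qfact q (N - i)"]
      show ?thesis unfolding f_def by simp
    qed
    show ?thesis by (intro DERIV_cmult DERIV_sum T)
  qed
  have "x * deriv (\<lambda>y. qHermite N y q) x
      = qfact q N * (\<Sum>i=0..N. ecoef i * (x * (real (N - i) * (a * x) ^ (N - i - 1) * a)) / qfact q (N - i))"
  proof -
    have dv: "deriv (\<lambda>y. qHermite N y q) x = qfact q N * (\<Sum>i=0..N. ecoef i * (real (N - i) * (a * x) ^ (N - i - 1) * a) / qfact q (N - i))"
      unfolding Hf by (rule DERIV_imp_deriv[OF D])
    have xs: "x * (\<Sum>i=0..N. ecoef i * (real (N - i) * (a * x) ^ (N - i - 1) * a) / qfact q (N - i))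
       = (\<Sum>i=0..N. ecoef i * (x * (real (N - i) * (a * x) ^ (N - i - 1) * a)) / qfact q (N - i))"
      unfolding sum_distrib_left by (rule sum.cong) auto
    have "x * deriv (\<lambda>y. qHermite N y q) x = qfact q N * (x * (\<Sum>i=0..N. ecoef i * (real (N - i) * (a * x) ^ (N - i - 1) * a) / qfact q (N - i)))"
      unfolding dv by (simp only: mult.left_commute)
    with xs show ?thesis by simp
  qed
  also have "\<dots> = qfact q N * (\<Sum>i=0..N. ecoef i * real (N - i) * (a * x) ^ (N - i) / qfact q (N - i))"
    by (intro arg_cong[where f="\<lambda>s. qfact q N * s"] sum.cong refl) (simp only: x_deriv_term)
  finally have L1: "x * deriv (\<lambda>y. qHermite N y q) x = \<dots>" .
  define g where "g = (\<lambda>i. (- real i * ecoef i) * (a * x) ^ (N - i) / qfact q (N - i))"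
  have L2: "x * deriv (\<lambda>y. qHermite N y q) x - real N * qHermite N x q = qfact q N * (\<Sum>i=0..N. g i)"
  proof -
    have "real N * qHermite N x q = qfact q N * (\<Sum>i=0..N. real N * ecoef i * (a * x) ^ (N - i) / qfact q (N - i))"
      by (simp add: qH_eq a_def sum_distrib_left mult_ac)
    moreover have "(\<Sum>i=0..N. ecoef i * real (N - i) * (a * x) ^ (N - i) / qfact q (N - i))
        - (\<Sum>i=0..N. real N * ecoef i * (a * x) ^ (N - i) / qfact q (N - i)) = (\<Sum>i=0..N. g i)"
      unfolding sum_subtractf[symmetric] g_def
      by (rule sum.cong) (auto simp: of_nat_diff field_simps qfact_nz[OF assms(1,2)])
    ultimately show ?thesis using L1 by (simp add: right_diff_distrib[symmetric])
  qed
  have e1: "ecoef (Suc 0) = 0" by (simp add: ecoef_def)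
  have S: "(\<Sum>i=0..N. g i) = 2 * (\<Sum>j=0..M. ecoef j * (a * x) ^ (M - j) / qfact q (M - j))"
  proof -
    have "(\<Sum>i=0..N. g i) = g 0 + (g 1 + (\<Sum>j=0..M. g (Suc (Suc j))))"
      unfolding NM by (simp only: sum.atLeast0_atMost_Suc_shift add.assoc) (simp add: comp_def)
    also have "\<dots> = (\<Sum>j=0..M. g (Suc (Suc j)))" by (simp add: g_def e1)
    also have "\<dots> = (\<Sum>j=0..M. 2 * (ecoef j * (a * x) ^ (M - j) / qfact q (M - j)))"
    proof (rule sum.cong)
      fix j assume "j \<in> {0..M}"
      have "- real (Suc (Suc j)) * ecoef (Suc (Suc j)) = 2 * ecoef j"
        using ecoef_rec[of "Suc (Suc j)"] by simp
      thus "g (Suc (Suc j)) = 2 * (ecoef j * (a * x) ^ (M - j) / qfact q (M - j))"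
        unfolding g_def NM by simp
    qed simp
    finally show ?thesis by (simp add: sum_distrib_left)
  qed
  have QF: "qfact q N = qint q N * qint q (N - 1) * qfact q (N - 2)"
    unfolding NM by (simp add: qfact_Suc)
  show ?thesis
    unfolding L2 S QF using qH_eq[of "N - 2" x q] NM
    by (simp add: a_def mult_ac)
qed

end
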